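(* Let $2\le n\le\infty$. (1) If $a\in A\setminus C$ is $n$-RF rel a subgroup $C\le A$, then it is $m$-RF rel $C$ for every $2\le m\le n$. (2) For subgroups $C\le B\le A$, if $a\in A\setminus B$ is $n$-RF rel $B$, then it is $n$-RF rel $C$. (3) For subgroups $C\le B\le A$, if $(A,B)$ and $(B,C)$ are both $n$-RF, then $(A,C)$ is $n$-RF.
   Context: For a group $G$, subgroup $D$, and $2\le n\le\infty$: $a\in G\setminus D$ is $n$-RF rel $D$ if $a^{e_1}d_1\cdots a^{e_k}d_k\ne\mathrm{id}$ for all $k\ge1$, $e_i\in\{\pm1\}$, $d_i\in D$ such that $d_i\ne\mathrm{id}$ whenever $e_i=-e_{i+1}$ (indices mod $k$), and fewer than $n$ of the $e_i$ are $+1$ and fewer than $n$ are $-1$. The pair $(G,D)$ is $n$-RF if every element of $G\setminus D$ is $n$-RF rel $D$. *)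

theory Defs
  imports "HOL-Algebra.Group" "HOL-Library.Extended_Nat"
begin

text \<open>A word a^{e_1} d_1 ... a^{e_k} d_k is encoded as a list of pairs (e_i, d_i),
  where e_i = True means exponent +1 and e_i = False means exponent -1.\<close>

definition word_prod :: "('a, 'b) monoid_scheme \<Rightarrow> 'a \<Rightarrow> (bool \<times> 'a) list \<Rightarrow> 'a" where
  "word_prod G a ws =
     foldr (\<lambda>(e, d) acc. (if e then a else inv\<^bsub>G\<^esub> a) \<otimes>\<^bsub>G\<^esub> d \<otimes>\<^bsub>G\<^esub> acc) ws \<one>\<^bsub>G\<^esub>"

definition admissible_word :: "('a, 'b) monoid_scheme \<Rightarrow> 'a set \<Rightarrow> enat \<Rightarrow> (bool \<times> 'a) list \<Rightarrow> bool" where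
  "admissible_word G D n ws \<longleftrightarrow>
     length ws \<ge> 1 \<and>
     (\<forall>i < length ws. snd (ws ! i) \<in> D) \<and>
     (\<forall>i < length ws. fst (ws ! i) \<noteq> fst (ws ! ((i + 1) mod length ws)) \<longrightarrow> snd (ws ! i) \<noteq> \<one>\<^bsub>G\<^esub>) \<and>
     enat (length (filter fst ws)) < n \<and>
     enat (length (filter (\<lambda>x. \<not> fst x) ws)) < n"

definition RF_rel :: "('a, 'b) monoid_scheme \<Rightarrow> 'a set \<Rightarrow> enat \<Rightarrow> 'a \<Rightarrow> bool" where
  "RF_rel G D n a \<longleftrightarrow>
     a \<in> carrier G - D \<and>
     (\<forall>ws. admissible_word G D n ws \<longrightarrow> word_prod G a ws \<noteq> \<one>\<^bsub>G\<^esub>)"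

definition RF_pair :: "('a, 'b) monoid_scheme \<Rightarrow> 'a set \<Rightarrow> enat \<Rightarrow> bool" where
  "RF_pair G D n \<longleftrightarrow> (\<forall>a \<in> carrier G - D. RF_rel G D n a)"

end

theory Submission
  imports Defs
begin

lemma wp_sub:
  assumes "group A" "subgroup B A" "a \<in> B"
  shows "word_prod (A\<lparr>carrier := B\<rparr>) a ws = word_prod A a ws"
  unfolding word_prod_def group.m_inv_consistent[OF assms] by simp

lemma adm_sub:
  "admissible_word (A\<lparr>carrier := B\<rparr>) C n ws = admissible_word A C n ws"
  unfolding admissible_word_def by simp

lemma adm_mono:
  assumes "admissible_word A C m ws" "m \<le> n"
  shows "admissible_word A C n ws"
  using assms unfolding admissible_word_def using order_less_le_trans by blast

lemma adm_sub2:
  assumes "admissible_word A C n ws" "C \<subseteq> B"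
  shows "admissible_word A B n ws"
  using assms unfolding admissible_word_def by blast

lemma part1:
  assumes "RF_rel A C n a" "m \<le> n"
  shows "RF_rel A C m a"
proof -
  have "\<And>ws. admissible_word A C m ws \<Longrightarrow> word_prod A a ws \<noteq> \<one>\<^bsub>A\<^esub>"
    using assms adm_mono[of A C m _ n] unfolding RF_rel_def by metis
  then show ?thesis using assms(1) unfolding RF_rel_def by simp
qed

lemma part2:
  assumes "C \<subseteq> B" "RF_rel A B n a"
  shows "RF_rel A C n a"
proof -
  have "\<And>ws. admissible_word A C n ws \<Longrightarrow> word_prod A a ws \<noteq> \<one>\<^bsub>A\<^esub>"
    using assms adm_sub2[of A C n _ B] unfolding RF_rel_def by metis
  moreover have "a \<in> carrier A - C" using assms unfolding RF_rel_def by blast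
  ultimately show ?thesis unfolding RF_rel_def by simp
qed

lemma part3:
  assumes "group A" "subgroup B A" "a \<in> B" "RF_rel (A\<lparr>carrier := B\<rparr>) C n a"
  shows "RF_rel A C n a"
proof -
  have "\<And>ws. admissible_word A C n ws \<Longrightarrow> word_prod A a ws \<noteq> \<one>\<^bsub>A\<^esub>"
  proof -
    fix ws assume "admissible_word A C n ws"
    then have "admissible_word (A\<lparr>carrier := B\<rparr>) C n ws" by (simp add: adm_sub)
    then have "word_prod (A\<lparr>carrier := B\<rparr>) a ws \<noteq> \<one>\<^bsub>A\<lparr>carrier := B\<rparr>\<^esub>"
      using assms(4) unfolding RF_rel_def by blast
    then show "word_prod A a ws \<noteq> \<one>\<^bsub>A\<^esub>" using wp_sub[OF assms(1-3)] by simp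
  qed
  moreover have "a \<in> carrier A - C" using assms subgroup.subset[OF assms(2)]
    unfolding RF_rel_def by auto
  ultimately show ?thesis unfolding RF_rel_def by simp
qed

theorem lemma5p21:
  fixes A :: "('a, 'b) monoid_scheme" and n :: enat
  assumes "group A" and "2 \<le> n"
  shows "(\<forall>C a m. subgroup C A \<and> RF_rel A C n a \<and> 2 \<le> m \<and> m \<le> n \<longrightarrow> RF_rel A C m a)
       \<and> (\<forall>B C a. subgroup B A \<and> subgroup C A \<and> C \<subseteq> B \<and> a \<in> carrier A - B \<and> RF_rel A B n a
                  \<longrightarrow> RF_rel A C n a)
       \<and> (\<forall>B C. subgroup B A \<and> subgroup C A \<and> C \<subseteq> B \<and> RF_pair A B n
                  \<and> RF_pair (A\<lparr>carrier := B\<rparr>) C n \<longrightarrow> RF_pair A C n)"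
proof (intro conjI allI impI)
  fix C a m assume h: "subgroup C A \<and> RF_rel A C n a \<and> 2 \<le> m \<and> m \<le> n"
  then have "RF_rel A C n a" "m \<le> n" by simp_all
  then show "RF_rel A C m a" by (rule part1)
next
  fix B C a assume h: "subgroup B A \<and> subgroup C A \<and> C \<subseteq> B \<and> a \<in> carrier A - B \<and> RF_rel A B n a"
  then have "C \<subseteq> B" "RF_rel A B n a" by simp_all
  then show "RF_rel A C n a" by (rule part2)
next
  fix B C assume h: "subgroup B A \<and> subgroup C A \<and> C \<subseteq> B \<and> RF_pair A B n
                  \<and> RF_pair (A\<lparr>carrier := B\<rparr>) C n"
  then have sB: "subgroup B A" and CB: "C \<subseteq> B" and pB: "RF_pair A B n"
    and pC: "RF_pair (A\<lparr>carrier := B\<rparr>) C n" by simp_all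
  show "RF_pair A C n" unfolding RF_pair_def
  proof
    fix a assume a: "a \<in> carrier A - C"
    show "RF_rel A C n a"
    proof (cases "a \<in> B")
      case False
      then have "a \<in> carrier A - B" using a by simp
      then have "RF_rel A B n a" using pB unfolding RF_pair_def by simp
      then show ?thesis using CB part2 by metis
    next
      case True
      then have "a \<in> carrier (A\<lparr>carrier := B\<rparr>) - C" using a by simp
      then have "RF_rel (A\<lparr>carrier := B\<rparr>) C n a" using pC unfolding RF_pair_def by simp
      then show ?thesis by (rule part3[OF assms(1) sB True])
    qed
  qed
qed

end
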